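(* Let $(S,\lambda_S^\bullet,\mu_S^{(0)})$, $(G,\lambda_G^\bullet,\mu_G^{(0)})$, $(T,\lambda_T^\bullet,\mu_T^{(0)})$ be Haar groupoids, $p:S\to G$, $q:T\to G$ homomorphisms of Haar groupoids, $P$ their weak pullback, and $\lambda_P^{(s,g,t)}=\lambda_S^s\times\delta_g\times\lambda_T^t$ for $(s,g,t)\in P^{(0)}$. Then $\lambda_P^\bullet$ is left invariant: for every $x\in P$ and every Borel $E\subseteq P$, $\lambda_P^{d_P(x)}(E)=\lambda_P^{r_P(x)}\big(x\cdot(E\cap P^{d_P(x)})\big)$, where $P^{v}=r_P^{-1}(v)$.
   Context: For a groupoid $G$: unit space $G^{(0)}$, range/source $r,d$, $G^u=r^{-1}(u)$. A continuous left Haar system on a groupoid $G$ is a family $\{\lambda^u\}_{u\in G^{(0)}}$ of positive Borel measures on $G$, $\lambda^u$ concentrated on $G^u$, which is continuous ($u\mapsto\int f\,d\lambda^u$ continuous for every continuous compactly supported $f\ge0$), left invariant ($\lambda^{d(x)}(E)=\lambda^{r(x)}(x\cdot(E\cap G^{d(x)}))$) and positive on open sets ($\lambda^u(A)>0$ for open $A$ meeting $G^u$). A Haar groupoid $(G,\lambda^\bullet,\mu^{(0)})$ is a second countable, locally compact, Hausdorff topological groupoid with a continuous left Haar system and a non-zero Radon measure $\mu^{(0)}$ on $G^{(0)}$ that is quasi-invariant (the induced measure $\mu(E)=\int\lambda^u(E)d\mu^{(0)}(u)$ and $\mu^{-1}(E)=\mu(E^{-1})$ are mutually absolutely continuous).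 A homomorphism of Haar groupoids is a continuous groupoid homomorphism $p$ with $p_*\mu\sim\nu$ for the induced measures. The weak pullback is $P=\{(s,g,t)\in S\times G\times T: r_G(g)=r_G(p(s)),\ d_G(g)=r_G(q(t))\}$ with subspace topology and groupoid operations: $((s,g,t),(\sigma,h,\tau))$ composable iff $r_S(\sigma)=d_S(s)$, $r_T(\tau)=d_T(t)$, $h=p(s)^{-1}gq(t)$, product $(s\sigma,g,t\tau)$; inverse $(s^{-1},p(s)^{-1}gq(t),t^{-1})$; $r_P(s,g,t)=(r_S(s),g,r_T(t))$, $d_P(s,g,t)=(d_S(s),p(s)^{-1}gq(t),d_T(t))$; $P^{(0)}=\{(s,g,t):s\in S^{(0)},t\in T^{(0)},r_G(g)=p(s),d_G(g)=q(t)\}$. *)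

theory Defs
  imports "HOL-Analysis.Analysis" "HOL-Probability.Probability"
begin

record 'a topgroupoid =
  gtop  :: "'a topology"
  gunits :: "'a set"
  grng :: "'a \<Rightarrow> 'a"
  gdom :: "'a \<Rightarrow> 'a"
  gmult :: "'a \<Rightarrow> 'a \<Rightarrow> 'a"
  ginv :: "'a \<Rightarrow> 'a"

abbreviation garr :: "('a, 'm) topgroupoid_scheme \<Rightarrow> 'a set" where
  "garr G \<equiv> topspace (gtop G)"

definition composable :: "('a, 'm) topgroupoid_scheme \<Rightarrow> ('a \<times> 'a) set" where
  "composable G = {(x, y). x \<in> garr G \<and> y \<in> garr G \<and> gdom G x = grng G y}"

definition groupoid :: "('a, 'm) topgroupoid_scheme \<Rightarrow> bool" where
  "groupoid G \<longleftrightarrow>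
     gunits G \<subseteq> garr G
   \<and> (\<forall>x\<in>garr G. grng G x \<in> gunits G \<and> gdom G x \<in> gunits G)
   \<and> (\<forall>u\<in>gunits G. grng G u = u \<and> gdom G u = u)
   \<and> (\<forall>(x, y)\<in>composable G. gmult G x y \<in> garr G
          \<and> grng G (gmult G x y) = grng G x \<and> gdom G (gmult G x y) = gdom G y)
   \<and> (\<forall>x y z. (x, y) \<in> composable G \<and> (y, z) \<in> composable G \<longrightarrow>
          gmult G (gmult G x y) z = gmult G x (gmult G y z))
   \<and> (\<forall>x\<in>garr G. gmult G (grng G x) x = x \<and> gmult G x (gdom G x) = x)
   \<and> (\<forall>x\<in>garr G. ginv G x \<in> garr G
          \<and> gdom G x = grng G (ginv G x) \<and> grng G x = gdom G (ginv G x)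
          \<and> gmult G x (ginv G x) = grng G x \<and> gmult G (ginv G x) x = gdom G x)"

definition topological_groupoid :: "('a, 'm) topgroupoid_scheme \<Rightarrow> bool" where
  "topological_groupoid G \<longleftrightarrow> groupoid G
   \<and> continuous_map (gtop G) (gtop G) (grng G)
   \<and> continuous_map (gtop G) (gtop G) (gdom G)
   \<and> continuous_map (gtop G) (gtop G) (ginv G)
   \<and> continuous_map (subtopology (prod_topology (gtop G) (gtop G)) (composable G)) (gtop G)
        (\<lambda>(x, y). gmult G x y)"

definition rfibre :: "('a, 'm) topgroupoid_scheme \<Rightarrow> 'a \<Rightarrow> 'a set" where
  "rfibre G u = {x \<in> garr G. grng G x = u}"

definition borel_of :: "'a topology \<Rightarrow> 'a measure" where
  "borel_of X = sigma (topspace X) {U. openin X U}"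

definition borel_measure_on :: "'a topology \<Rightarrow> 'a measure \<Rightarrow> bool" where
  "borel_measure_on X M \<longleftrightarrow> space M = topspace X \<and> sets M = sets (borel_of X)"

definition radon_measure_on :: "'a topology \<Rightarrow> 'a measure \<Rightarrow> bool" where
  "radon_measure_on X M \<longleftrightarrow> borel_measure_on X M
   \<and> (\<forall>K. compactin X K \<longrightarrow> emeasure M K < \<infinity>)
   \<and> (\<forall>E\<in>sets M. emeasure M E = (INF U\<in>{U. openin X U \<and> E \<subseteq> U}. emeasure M U))
   \<and> (\<forall>U. openin X U \<longrightarrow> emeasure M U = (SUP K\<in>{K. compactin X K \<and> K \<subseteq> U}. emeasure M K))"

definition continuous_left_haar_system ::
  "('a, 'm) topgroupoid_scheme \<Rightarrow> ('a \<Rightarrow> 'a measure) \<Rightarrow> bool" where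
  "continuous_left_haar_system G lam \<longleftrightarrow>
     (\<forall>u\<in>gunits G. borel_measure_on (gtop G) (lam u)
        \<and> emeasure (lam u) (garr G - rfibre G u) = 0)
   \<and> (\<forall>f::'a \<Rightarrow> real. continuous_map (gtop G) euclideanreal f
        \<and> compactin (gtop G) ((gtop G) closure_of {x \<in> garr G. f x \<noteq> 0})
        \<and> (\<forall>x\<in>garr G. 0 \<le> f x) \<longrightarrow>
          (\<forall>u\<in>gunits G. (\<integral>\<^sup>+ x. ennreal (f x) \<partial>lam u) < \<infinity>)
          \<and> continuous_map (subtopology (gtop G) (gunits G)) euclidean
              (\<lambda>u. \<integral>\<^sup>+ x. ennreal (f x) \<partial>lam u))
   \<and> (\<forall>x\<in>garr G. \<forall>E\<in>sets (borel_of (gtop G)).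
        emeasure (lam (gdom G x)) E
          = emeasure (lam (grng G x)) (gmult G x ` (E \<inter> rfibre G (gdom G x))))
   \<and> (\<forall>u\<in>gunits G. \<forall>A. openin (gtop G) A \<and> A \<inter> rfibre G u \<noteq> {} \<longrightarrow>
        emeasure (lam u) A > 0)"

definition induced_measure ::
  "('a \<Rightarrow> 'a measure) \<Rightarrow> 'a measure \<Rightarrow> 'a set \<Rightarrow> ennreal" where
  "induced_measure lam mu0 E = (\<integral>\<^sup>+ u. emeasure (lam u) E \<partial>mu0)"

definition haar_groupoid ::
  "('a, 'm) topgroupoid_scheme \<Rightarrow> ('a \<Rightarrow> 'a measure) \<Rightarrow> 'a measure \<Rightarrow> bool" where
  "haar_groupoid G lam mu0 \<longleftrightarrow>
     topological_groupoid G
   \<and> second_countable (gtop G) \<and> locally_compact_space (gtop G) \<and> Hausdorff_space (gtop G)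
   \<and> continuous_left_haar_system G lam
   \<and> radon_measure_on (subtopology (gtop G) (gunits G)) mu0
   \<and> emeasure mu0 (gunits G) \<noteq> 0
   \<and> (\<forall>E\<in>sets (borel_of (gtop G)).
        induced_measure lam mu0 E = 0 \<longleftrightarrow> induced_measure lam mu0 (ginv G ` E) = 0)"

definition haar_groupoid_hom ::
  "('a, 'm) topgroupoid_scheme \<Rightarrow> ('a \<Rightarrow> 'a measure) \<Rightarrow> 'a measure \<Rightarrow>
   ('b, 'n) topgroupoid_scheme \<Rightarrow> ('b \<Rightarrow> 'b measure) \<Rightarrow> 'b measure \<Rightarrow>
   ('a \<Rightarrow> 'b) \<Rightarrow> bool" where
  "haar_groupoid_hom S lamS muS G lamG muG p \<longleftrightarrow>
     continuous_map (gtop S) (gtop G) p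
   \<and> (\<forall>(x, y)\<in>composable S. (p x, p y) \<in> composable G \<and> p (gmult S x y) = gmult G (p x) (p y))
   \<and> (\<forall>E\<in>sets (borel_of (gtop G)).
        induced_measure lamS muS (p -` E \<inter> garr S) = 0 \<longleftrightarrow> induced_measure lamG muG E = 0)"

definition wpb_arr ::
  "('a, 'm) topgroupoid_scheme \<Rightarrow> ('b, 'n) topgroupoid_scheme \<Rightarrow> ('c, 'k) topgroupoid_scheme
   \<Rightarrow> ('a \<Rightarrow> 'b) \<Rightarrow> ('c \<Rightarrow> 'b) \<Rightarrow> ('a \<times> 'b \<times> 'c) set" where
  "wpb_arr S G T p q = {(s, g, t). s \<in> garr S \<and> g \<in> garr G \<and> t \<in> garr T
      \<and> grng G g = grng G (p s) \<and> gdom G g = grng G (q t)}"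

definition wpb_top ::
  "('a, 'm) topgroupoid_scheme \<Rightarrow> ('b, 'n) topgroupoid_scheme \<Rightarrow> ('c, 'k) topgroupoid_scheme
   \<Rightarrow> ('a \<Rightarrow> 'b) \<Rightarrow> ('c \<Rightarrow> 'b) \<Rightarrow> ('a \<times> 'b \<times> 'c) topology" where
  "wpb_top S G T p q = subtopology (prod_topology (gtop S) (prod_topology (gtop G) (gtop T)))
      (wpb_arr S G T p q)"

definition wpb_units ::
  "('a, 'm) topgroupoid_scheme \<Rightarrow> ('b, 'n) topgroupoid_scheme \<Rightarrow> ('c, 'k) topgroupoid_scheme
   \<Rightarrow> ('a \<Rightarrow> 'b) \<Rightarrow> ('c \<Rightarrow> 'b) \<Rightarrow> ('a \<times> 'b \<times> 'c) set" where
  "wpb_units S G T p q = {(s, g, t). s \<in> gunits S \<and> t \<in> gunits T \<and> g \<in> garr G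
      \<and> grng G g = p s \<and> gdom G g = q t}"

definition wpb_rng ::
  "('a, 'm) topgroupoid_scheme \<Rightarrow> ('c, 'k) topgroupoid_scheme
   \<Rightarrow> ('a \<times> 'b \<times> 'c) \<Rightarrow> ('a \<times> 'b \<times> 'c)" where
  "wpb_rng S T = (\<lambda>(s, g, t). (grng S s, g, grng T t))"

definition wpb_dom ::
  "('a, 'm) topgroupoid_scheme \<Rightarrow> ('b, 'n) topgroupoid_scheme \<Rightarrow> ('c, 'k) topgroupoid_scheme
   \<Rightarrow> ('a \<Rightarrow> 'b) \<Rightarrow> ('c \<Rightarrow> 'b) \<Rightarrow> ('a \<times> 'b \<times> 'c) \<Rightarrow> ('a \<times> 'b \<times> 'c)" where
  "wpb_dom S G T p q = (\<lambda>(s, g, t).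
      (gdom S s, gmult G (gmult G (ginv G (p s)) g) (q t), gdom T t))"

definition wpb_mult ::
  "('a, 'm) topgroupoid_scheme \<Rightarrow> ('c, 'k) topgroupoid_scheme
   \<Rightarrow> ('a \<times> 'b \<times> 'c) \<Rightarrow> ('a \<times> 'b \<times> 'c) \<Rightarrow> ('a \<times> 'b \<times> 'c)" where
  "wpb_mult S T = (\<lambda>(s, g, t) (\<sigma>, h, \<tau>). (gmult S s \<sigma>, g, gmult T t \<tau>))"

definition wpb_haar ::
  "('b, 'n) topgroupoid_scheme \<Rightarrow> ('a \<Rightarrow> 'a measure) \<Rightarrow> ('c \<Rightarrow> 'c measure)
   \<Rightarrow> ('a \<times> 'b \<times> 'c) \<Rightarrow> ('a \<times> 'b \<times> 'c) measure" where
  "wpb_haar G lamS lamT = (\<lambda>(s, g, t).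
      lamS s \<Otimes>\<^sub>M (return (borel_of (gtop G)) g \<Otimes>\<^sub>M lamT t))"

end

theory Submission
  imports Defs
begin

lemma space_borel_of[simp]: "space (borel_of X) = topspace X"
  unfolding borel_of_def by (simp add: space_measure_of_conv openin_subset subset_iff)

lemma sets_borel_of: "sets (borel_of X) = sigma_sets (topspace X) {U. openin X U}"
  unfolding borel_of_def by (rule sets_measure_of) (auto dest: openin_subset)

lemma openin_in_borel_of: "openin X U \<Longrightarrow> U \<in> sets (borel_of X)"
  unfolding sets_borel_of by auto

lemma closedin_in_borel_of: "closedin X C \<Longrightarrow> C \<in> sets (borel_of X)"
proof -
  assume "closedin X C"
  then have "C = topspace X - (topspace X - C)" "openin X (topspace X - C)"
    by (auto simp: closedin_def)
  then show ?thesis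
    by (metis openin_in_borel_of sets.compl_sets space_borel_of)
qed

lemma continuous_map_measurable:
  assumes "continuous_map X Y f"
  shows "f \<in> measurable (borel_of X) (borel_of Y)"
  unfolding borel_of_def
proof (rule measurable_measure_of)
  show "{U. openin Y U} \<subseteq> Pow (topspace Y)" by (auto dest: openin_subset)
  show "f \<in> space (sigma (topspace X) {U. openin X U}) \<rightarrow> topspace Y"
    using assms by (auto simp: space_measure_of_conv dest: openin_subset continuous_map_image_subset_topspace)
  fix V assume "V \<in> {U. openin Y U}"
  then have "openin X {x \<in> topspace X. f x \<in> V}"
    using assms openin_continuous_map_preimage by blast
  moreover have "f -` V \<inter> space (sigma (topspace X) {U. openin X U}) = {x \<in> topspace X. f x \<in> V}"
    by (auto simp: space_measure_of_conv dest: openin_subset)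
  ultimately show "f -` V \<inter> space (sigma (topspace X) {U. openin X U}) \<in> sets (sigma (topspace X) {U. openin X U})"
    using openin_in_borel_of unfolding borel_of_def by metis
qed

lemma open_prod_in_sets:
  assumes "second_countable X" "second_countable Y"
    and hX: "\<And>U. openin X U \<Longrightarrow> U \<in> sets MX"
    and hY: "\<And>V. openin Y V \<Longrightarrow> V \<in> sets MY"
    and W: "openin (prod_topology X Y) W"
  shows "W \<in> sets (MX \<Otimes>\<^sub>M MY)"
proof -
  obtain BX where BX: "countable BX" "\<And>V. V \<in> BX \<Longrightarrow> openin X V"
    "\<And>U x. openin X U \<Longrightarrow> x \<in> U \<Longrightarrow> \<exists>V \<in> BX. x \<in> V \<and> V \<subseteq> U"
    using assms(1) unfolding second_countable_def by metis
  obtain BY where BY: "countable BY" "\<And>V. V \<in> BY \<Longrightarrow> openin Y V"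
    "\<And>U x. openin Y U \<Longrightarrow> x \<in> U \<Longrightarrow> \<exists>V \<in> BY. x \<in> V \<and> V \<subseteq> U"
    using assms(2) unfolding second_countable_def by metis
  define R where "R = (\<lambda>(U,V). U \<times> V) ` {(U,V). U \<in> BX \<and> V \<in> BY \<and> U \<times> V \<subseteq> W}"
  have "countable R"
  proof -
    have "{(U,V). U \<in> BX \<and> V \<in> BY \<and> U \<times> V \<subseteq> W} \<subseteq> BX \<times> BY" by auto
    then have "countable {(U,V). U \<in> BX \<and> V \<in> BY \<and> U \<times> V \<subseteq> W}"
      using BX(1) BY(1) by (meson countable_SIGMA countable_subset)
    then show ?thesis unfolding R_def by blast
  qed
  moreover have "R \<subseteq> sets (MX \<Otimes>\<^sub>M MY)"
    unfolding R_def using BX(2) BY(2) hX hY by (auto intro!: pair_measureI)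
  moreover have "W = \<Union>R"
  proof
    show "\<Union>R \<subseteq> W" unfolding R_def by auto
    show "W \<subseteq> \<Union>R"
    proof
      fix z assume "z \<in> W"
      then obtain a b where z: "z = (a,b)" "(a,b) \<in> W" by (cases z) auto
      then obtain U V where UV: "openin X U" "openin Y V" "a \<in> U" "b \<in> V" "U \<times> V \<subseteq> W"
        using W unfolding openin_prod_topology_alt by metis
      obtain U' where "U' \<in> BX" "a \<in> U'" "U' \<subseteq> U" using BX(3) UV by metis
      moreover obtain V' where "V' \<in> BY" "b \<in> V'" "V' \<subseteq> V" using BY(3) UV by metis
      ultimately have "U' \<times> V' \<in> R" "z \<in> U' \<times> V'"
        unfolding R_def using UV(5) z by (auto intro!: image_eqI[where x="(U',V')"])
      then show "z \<in> \<Union>R" by blast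
    qed
  qed
  ultimately show ?thesis by (metis sets.countable_Union)
qed

lemma haar_sigma_finite:
  assumes H: "haar_groupoid G lam mu" and u: "u \<in> gunits G"
  shows "sigma_finite_measure (lam u)"
proof -
  let ?X = "gtop G"
  have hs: "continuous_left_haar_system G lam" and lc: "locally_compact_space ?X"
    and Hd: "Hausdorff_space ?X" and sc: "second_countable ?X"
    using H unfolding haar_groupoid_def by auto
  have bm: "borel_measure_on ?X (lam u)" using hs u unfolding continuous_left_haar_system_def by auto
  then have sp: "space (lam u) = topspace ?X" and st: "sets (lam u) = sets (borel_of ?X)"
    unfolding borel_measure_on_def by auto
  have fin: "\<And>f::'a \<Rightarrow> real. continuous_map ?X euclideanreal f \<Longrightarrow>
        compactin ?X (?X closure_of {x \<in> topspace ?X. f x \<noteq> 0}) \<Longrightarrow> (\<forall>x\<in>topspace ?X. 0 \<le> f x)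
        \<Longrightarrow> (\<integral>\<^sup>+ x. ennreal (f x) \<partial>lam u) < \<infinity>"
    using hs u unfolding continuous_left_haar_system_def by blast
  have cr: "completely_regular_space ?X"
    using lc Hd locally_compact_regular_imp_completely_regular_space by blast
  have loc: "\<exists>V. openin ?X V \<and> y \<in> V \<and> emeasure (lam u) V < \<infinity>" if y: "y \<in> topspace ?X" for y
  proof -
    obtain U K where UK: "openin ?X U" "compactin ?X K" "y \<in> U" "U \<subseteq> K"
      using lc y unfolding locally_compact_space_def by blast
    have "closedin ?X (topspace ?X - U)" using closedin_diff[OF closedin_topspace UK(1)] .
    moreover have "y \<in> topspace ?X - (topspace ?X - U)" using y UK(3) by blast
    ultimately obtain h :: "'a \<Rightarrow> real" where h: "continuous_map ?X (top_of_set {0..1}) h"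
      "h y = 0" "h ` (topspace ?X - U) \<subseteq> {1}"
      using cr unfolding completely_regular_space_def by meson
    have hc: "continuous_map ?X euclideanreal h"
      using h(1) continuous_map_in_subtopology by blast
    define f where "f z = max 0 (2 - 4 * h z)" for z
    have fc: "continuous_map ?X euclideanreal f"
      unfolding f_def by (intro continuous_intros hc)
    define C where "C = {z \<in> topspace ?X. h z \<in> {..1/2}}"
    have Cc: "closedin ?X C" unfolding C_def
      by (rule closedin_continuous_map_preimage[OF hc]) simp
    have CU: "C \<subseteq> U"
    proof
      fix z assume z: "z \<in> C"
      show "z \<in> U"
      proof (rule ccontr)
        assume "z \<notin> U"
        then have "h z = 1" using h(3) z unfolding C_def by blast
        then show False using z unfolding C_def by simp
      qed
    qed
    have "{x \<in> topspace ?X. f x \<noteq> 0} \<subseteq> C" unfolding C_def f_def by (auto simp: max_def split: if_splits)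
    then have "?X closure_of {x \<in> topspace ?X. f x \<noteq> 0} \<subseteq> K"
      using closure_of_minimal[OF _ Cc] CU UK(4) by (meson order_trans)
    then have "compactin ?X (?X closure_of {x \<in> topspace ?X. f x \<noteq> 0})"
      using closed_compactin[OF UK(2)] closedin_closure_of by meson
    then have ffin: "(\<integral>\<^sup>+ x. ennreal (f x) \<partial>lam u) < \<infinity>"
    proof (rule fin[OF fc])
      show "\<forall>x\<in>topspace ?X. 0 \<le> f x" unfolding f_def by simp
    qed
    define V where "V = {z \<in> topspace ?X. h z \<in> {..<1/4}}"
    have Vo: "openin ?X V" unfolding V_def
      by (rule openin_continuous_map_preimage[OF hc]) simp
    have Vs: "V \<in> sets (lam u)" using st openin_in_borel_of[OF Vo] by simp
    have "emeasure (lam u) V = (\<integral>\<^sup>+ x. indicator V x \<partial>lam u)"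
      using Vs by simp
    also have "\<dots> \<le> (\<integral>\<^sup>+ x. ennreal (f x) \<partial>lam u)"
    proof (rule nn_integral_mono)
      fix x assume "x \<in> space (lam u)"
      show "indicator V x \<le> ennreal (f x)"
      proof (cases "x \<in> V")
        case True
        then have "1 \<le> f x" unfolding V_def f_def by auto
        then show ?thesis using True by simp
      qed simp
    qed
    finally have le: "emeasure (lam u) V \<le> (\<integral>\<^sup>+ x. ennreal (f x) \<partial>lam u)" .
    have "emeasure (lam u) V < \<infinity>" using le_less_trans[OF le ffin] .
    moreover have "y \<in> V" using y h(2) unfolding V_def by simp
    ultimately show ?thesis using Vo by blast
  qed
  define \<U> where "\<U> = {V. openin ?X V \<and> emeasure (lam u) V < \<infinity>}"
  have "\<Union>\<U> = topspace ?X"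
  proof
    show "\<Union>\<U> \<subseteq> topspace ?X" unfolding \<U>_def using openin_subset by blast
    show "topspace ?X \<subseteq> \<Union>\<U>"
    proof
      fix y assume "y \<in> topspace ?X"
      then obtain V where "openin ?X V" "y \<in> V" "emeasure (lam u) V < \<infinity>" using loc by blast
      then show "y \<in> \<Union>\<U>" unfolding \<U>_def by blast
    qed
  qed
  moreover have "\<forall>U\<in>\<U>. openin ?X U" unfolding \<U>_def by auto
  ultimately obtain \<V> where V: "countable \<V>" "\<V> \<subseteq> \<U>" "\<Union>\<V> = topspace ?X"
    using second_countable_imp_Lindelof_space[OF sc] unfolding Lindelof_space_def by metis
  show ?thesis
    unfolding sigma_finite_measure_def
  proof (intro exI[of _ \<V>] conjI)
    show "\<V> \<subseteq> sets (lam u)" using V(2) st openin_in_borel_of unfolding \<U>_def by auto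
    show "\<forall>a\<in>\<V>. emeasure (lam u) a \<noteq> \<infinity>" using V(2) unfolding \<U>_def by auto
    show "countable \<V>" by (rule V(1))
    show "\<Union>\<V> = space (lam u)" using V(3) sp by simp
  qed
qed

lemma measurable_piecewise:
  assumes A: "A \<in> sets (borel_of X)" and f: "continuous_map (subtopology X A) Y f"
    and c: "c \<in> topspace Y"
  shows "(\<lambda>x. if x \<in> A then f x else c) \<in> measurable (borel_of X) (borel_of Y)"
proof -
  have AX: "A \<subseteq> topspace X" using sets.sets_into_space[OF A] by simp
  have fA: "\<And>x. x \<in> A \<Longrightarrow> f x \<in> topspace Y"
    using f AX unfolding continuous_map_def by auto
  show ?thesis
    unfolding borel_of_def[of Y]
  proof (rule measurable_measure_of)
    show "{U. openin Y U} \<subseteq> Pow (topspace Y)" by (auto dest: openin_subset)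
    show "(\<lambda>x. if x \<in> A then f x else c) \<in> space (borel_of X) \<rightarrow> topspace Y"
      using fA c by auto
    fix V assume "V \<in> {U. openin Y U}"
    then have V: "openin Y V" by simp
    have "openin (subtopology X A) {x \<in> topspace (subtopology X A). f x \<in> V}"
      using openin_continuous_map_preimage[OF f V] .
    then obtain U where U: "openin X U" "{x \<in> topspace (subtopology X A). f x \<in> V} = U \<inter> A"
      unfolding openin_subtopology by blast
    have eq: "(\<lambda>x. if x \<in> A then f x else c) -` V \<inter> space (borel_of X)
        = (U \<inter> A) \<union> (if c \<in> V then topspace X - A else {})"
      using U(2) AX unfolding topspace_subtopology by (auto split: if_split_asm)
    have "U \<inter> A \<in> sets (borel_of X)" using openin_in_borel_of[OF U(1)] A by auto
    moreover have "topspace X - A \<in> sets (borel_of X)"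
      using A by (metis sets.compl_sets space_borel_of)
    ultimately show "(\<lambda>x. if x \<in> A then f x else c) -` V \<inter> space (borel_of X) \<in> sets (borel_of X)"
      unfolding eq by auto
  qed
qed

lemma groupoidD:
  assumes "groupoid G"
  shows "gunits G \<subseteq> garr G"
   "\<forall>x\<in>garr G. grng G x \<in> gunits G \<and> gdom G x \<in> gunits G"
   "\<forall>u\<in>gunits G. grng G u = u \<and> gdom G u = u"
   "\<forall>(x, y)\<in>composable G. gmult G x y \<in> garr G
          \<and> grng G (gmult G x y) = grng G x \<and> gdom G (gmult G x y) = gdom G y"
   "\<forall>x y z. (x, y) \<in> composable G \<and> (y, z) \<in> composable G \<longrightarrow>
          gmult G (gmult G x y) z = gmult G x (gmult G y z)"
   "\<forall>x\<in>garr G. gmult G (grng G x) x = x \<and> gmult G x (gdom G x) = x"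
   "\<forall>x\<in>garr G. ginv G x \<in> garr G
          \<and> gdom G x = grng G (ginv G x) \<and> grng G x = gdom G (ginv G x)
          \<and> gmult G x (ginv G x) = grng G x \<and> gmult G (ginv G x) x = gdom G x"
proof -
  note D = assms[unfolded groupoid_def]
  show "gunits G \<subseteq> garr G" using D by (rule conjunct1)
  show "\<forall>x\<in>garr G. grng G x \<in> gunits G \<and> gdom G x \<in> gunits G" using D[THEN conjunct2] by (rule conjunct1)
  show "\<forall>u\<in>gunits G. grng G u = u \<and> gdom G u = u" using D[THEN conjunct2, THEN conjunct2] by (rule conjunct1)
  show "\<forall>(x, y)\<in>composable G. gmult G x y \<in> garr G
          \<and> grng G (gmult G x y) = grng G x \<and> gdom G (gmult G x y) = gdom G y"
    using D[THEN conjunct2, THEN conjunct2, THEN conjunct2] by (rule conjunct1)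
  show "\<forall>x y z. (x, y) \<in> composable G \<and> (y, z) \<in> composable G \<longrightarrow>
          gmult G (gmult G x y) z = gmult G x (gmult G y z)"
    using D[THEN conjunct2, THEN conjunct2, THEN conjunct2, THEN conjunct2] by (rule conjunct1)
  show "\<forall>x\<in>garr G. gmult G (grng G x) x = x \<and> gmult G x (gdom G x) = x"
    using D[THEN conjunct2, THEN conjunct2, THEN conjunct2, THEN conjunct2, THEN conjunct2] by (rule conjunct1)
  show "\<forall>x\<in>garr G. ginv G x \<in> garr G
          \<and> gdom G x = grng G (ginv G x) \<and> grng G x = gdom G (ginv G x)
          \<and> gmult G x (ginv G x) = grng G x \<and> gmult G (ginv G x) x = gdom G x"
    using D[THEN conjunct2, THEN conjunct2, THEN conjunct2, THEN conjunct2, THEN conjunct2] by (rule conjunct2)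
qed

lemma gpd_comp:
  assumes "groupoid G" "x \<in> garr G" "y \<in> garr G" "gdom G x = grng G y"
  shows "gmult G x y \<in> garr G" "grng G (gmult G x y) = grng G x" "gdom G (gmult G x y) = gdom G y"
proof -
  have "(x, y) \<in> composable G" using assms unfolding composable_def by simp
  from bspec[OF groupoidD(4)[OF assms(1)] this]
  show "gmult G x y \<in> garr G" "grng G (gmult G x y) = grng G x" "gdom G (gmult G x y) = gdom G y"
    by simp_all
qed

lemma gpd_assoc:
  assumes "groupoid G" "x \<in> garr G" "y \<in> garr G" "z \<in> garr G"
    "gdom G x = grng G y" "gdom G y = grng G z"
  shows "gmult G (gmult G x y) z = gmult G x (gmult G y z)"
proof -
  have "(x, y) \<in> composable G" "(y, z) \<in> composable G" using assms unfolding composable_def by simp_all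
  then show ?thesis using groupoidD(5)[OF assms(1)] by blast
qed

lemma gpd_inv:
  assumes "groupoid G" "x \<in> garr G"
  shows "ginv G x \<in> garr G" "grng G (ginv G x) = gdom G x" "gdom G (ginv G x) = grng G x"
    "gmult G x (ginv G x) = grng G x" "gmult G (ginv G x) x = gdom G x"
  using bspec[OF groupoidD(7)[OF assms(1)] assms(2)] by simp_all

lemma gpd_unit:
  assumes "groupoid G" "x \<in> garr G"
  shows "gmult G (grng G x) x = x" "gmult G x (gdom G x) = x"
    "grng G x \<in> gunits G" "gdom G x \<in> gunits G"
    "grng G x \<in> garr G" "gdom G x \<in> garr G"
proof -
  show "gmult G (grng G x) x = x" "gmult G x (gdom G x) = x"
    using bspec[OF groupoidD(6)[OF assms(1)] assms(2)] by simp_all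
  show u: "grng G x \<in> gunits G" "gdom G x \<in> gunits G"
    using bspec[OF groupoidD(2)[OF assms(1)] assms(2)] by simp_all
  show "grng G x \<in> garr G" "gdom G x \<in> garr G"
    using u groupoidD(1)[OF assms(1)] by auto
qed

lemma gpd_cancel1:
  assumes G: "groupoid G" and s: "s \<in> garr G" and \<sigma>: "\<sigma> \<in> garr G" "grng G \<sigma> = gdom G s"
  shows "gmult G (ginv G s) (gmult G s \<sigma>) = \<sigma>"
proof -
  have "gmult G (ginv G s) (gmult G s \<sigma>) = gmult G (gmult G (ginv G s) s) \<sigma>"
    using gpd_assoc[OF G gpd_inv(1)[OF G s] s \<sigma>(1)] gpd_inv[OF G s] \<sigma> by simp
  also have "\<dots> = \<sigma>" using gpd_inv(5)[OF G s] \<sigma> gpd_unit[OF G \<sigma>(1)] by simp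
  finally show ?thesis .
qed

lemma gpd_cancel2:
  assumes G: "groupoid G" and s: "s \<in> garr G" and \<sigma>: "\<sigma> \<in> garr G" "grng G \<sigma> = grng G s"
  shows "gmult G s (gmult G (ginv G s) \<sigma>) = \<sigma>"
    "gmult G (ginv G s) \<sigma> \<in> garr G" "grng G (gmult G (ginv G s) \<sigma>) = gdom G s"
proof -
  have "gmult G s (gmult G (ginv G s) \<sigma>) = gmult G (gmult G s (ginv G s)) \<sigma>"
    using gpd_assoc[OF G s gpd_inv(1)[OF G s] \<sigma>(1)] gpd_inv[OF G s] \<sigma> by simp
  also have "\<dots> = \<sigma>" using gpd_inv(4)[OF G s] \<sigma> gpd_unit[OF G \<sigma>(1)] by simp
  finally show "gmult G s (gmult G (ginv G s) \<sigma>) = \<sigma>" .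
  show "gmult G (ginv G s) \<sigma> \<in> garr G" "grng G (gmult G (ginv G s) \<sigma>) = gdom G s"
    using gpd_comp[OF G gpd_inv(1)[OF G s] \<sigma>(1)] gpd_inv[OF G s] \<sigma> by auto
qed

lemma rfibre_closed:
  assumes "topological_groupoid G" "Hausdorff_space (gtop G)" "u \<in> garr G"
  shows "closedin (gtop G) (rfibre G u)"
proof -
  have "closedin (gtop G) {x \<in> topspace (gtop G). grng G x \<in> {u}}"
    using assms closedin_Hausdorff_singleton unfolding topological_groupoid_def
    by (intro closedin_continuous_map_preimage) auto
  then show ?thesis unfolding rfibre_def by simp
qed

lemma transl_continuous:
  assumes G: "topological_groupoid G" and a: "a \<in> garr G"
  shows "continuous_map (subtopology (gtop G) (rfibre G (gdom G a))) (gtop G) (\<lambda>\<sigma>. gmult G a \<sigma>)"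
proof -
  have m: "continuous_map (subtopology (prod_topology (gtop G) (gtop G)) (composable G)) (gtop G)
        (\<lambda>(x, y). gmult G x y)" using G unfolding topological_groupoid_def by blast
  have p: "continuous_map (subtopology (gtop G) (rfibre G (gdom G a)))
      (subtopology (prod_topology (gtop G) (gtop G)) (composable G)) (\<lambda>\<sigma>. (a, \<sigma>))"
    unfolding continuous_map_in_subtopology
  proof
    show "continuous_map (subtopology (gtop G) (rfibre G (gdom G a))) (prod_topology (gtop G) (gtop G)) (\<lambda>\<sigma>. (a, \<sigma>))"
      using a by (intro continuous_map_pairedI continuous_map_from_subtopology continuous_map_id[unfolded id_def]) auto
    show "(\<lambda>\<sigma>. (a, \<sigma>)) \<in> topspace (subtopology (gtop G) (rfibre G (gdom G a))) \<rightarrow> composable G"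
      using a by (auto simp: composable_def rfibre_def topspace_subtopology)
  qed
  show ?thesis using continuous_map_compose[OF p m] by (simp add: o_def)
qed

lemma second_countable_prod:
  assumes "second_countable X" "second_countable Y"
  shows "second_countable (prod_topology X Y)"
proof -
  obtain BX where BX: "countable BX" "\<And>V. V \<in> BX \<Longrightarrow> openin X V"
    "\<And>U x. openin X U \<Longrightarrow> x \<in> U \<Longrightarrow> \<exists>V \<in> BX. x \<in> V \<and> V \<subseteq> U"
    using assms(1) unfolding second_countable_def by metis
  obtain BY where BY: "countable BY" "\<And>V. V \<in> BY \<Longrightarrow> openin Y V"
    "\<And>U x. openin Y U \<Longrightarrow> x \<in> U \<Longrightarrow> \<exists>V \<in> BY. x \<in> V \<and> V \<subseteq> U"
    using assms(2) unfolding second_countable_def by metis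
  define B where "B = (\<lambda>(U,V). U \<times> V) ` (BX \<times> BY)"
  show ?thesis unfolding second_countable_def
  proof (intro exI[of _ B] conjI ballI allI impI)
    show "countable B" unfolding B_def using BX(1) BY(1) by simp
    fix W assume "W \<in> B"
    then show "openin (prod_topology X Y) W"
      unfolding B_def using BX(2) BY(2) by (auto simp: openin_prod_Times_iff)
  next
    fix W z assume Wz: "openin (prod_topology X Y) W \<and> z \<in> W"
    then obtain a b where z: "z = (a,b)" "(a,b) \<in> W" by (cases z) auto
    then obtain U V where UV: "openin X U" "openin Y V" "a \<in> U" "b \<in> V" "U \<times> V \<subseteq> W"
      using Wz unfolding openin_prod_topology_alt by metis
    obtain U' where U': "U' \<in> BX" "a \<in> U'" "U' \<subseteq> U" using BX(3) UV by metis
    obtain V' where V': "V' \<in> BY" "b \<in> V'" "V' \<subseteq> V" using BY(3) UV by metis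
    have "U' \<times> V' \<in> B" unfolding B_def using U'(1) V'(1) by (auto intro!: image_eqI[where x="(U',V')"])
    moreover have "z \<in> U' \<times> V'" using z U' V' by simp
    moreover have "U' \<times> V' \<subseteq> U \<times> V" using U'(3) V'(3) by auto
    then have "U' \<times> V' \<subseteq> W" using UV(5) by (rule order_trans)
    ultimately show "\<exists>V\<in>B. z \<in> V \<and> V \<subseteq> W" by (intro bexI[of _ "U' \<times> V'"] conjI)
  qed
qed

lemma eq_sets:
  assumes Y: "Hausdorff_space Y" "second_countable Y"
    and f: "f \<in> measurable M (borel_of Y)" and h: "h \<in> measurable M (borel_of Y)"
  shows "{x \<in> space M. f x = h x} \<in> sets M"
proof -
  define Od where "Od = topspace Y \<times> topspace Y - (\<lambda>x. (x,x)) ` topspace Y"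
  have Oo: "openin (prod_topology Y Y) Od"
    using Y(1) unfolding Hausdorff_space_closedin_diagonal closedin_def Od_def topspace_prod_topology by blast
  have Ods: "Od \<in> sets (borel_of Y \<Otimes>\<^sub>M borel_of Y)"
    by (rule open_prod_in_sets[OF Y(2) Y(2) _ _ Oo]) (simp_all add: openin_in_borel_of)
  have k: "(\<lambda>x. (f x, h x)) \<in> measurable M (borel_of Y \<Otimes>\<^sub>M borel_of Y)"
    using f h by (rule measurable_Pair)
  have fs: "f x \<in> topspace Y" "h x \<in> topspace Y" if "x \<in> space M" for x
    using measurable_space[OF f that] measurable_space[OF h that] by auto
  have "{x \<in> space M. f x = h x} = space M - ((\<lambda>x. (f x, h x)) -` Od \<inter> space M)"
    using fs unfolding Od_def by auto
  also have "\<dots> \<in> sets M" using measurable_sets[OF k Ods] by auto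
  finally show ?thesis .
qed


theorem proposition4p4:
  fixes S :: "('a, 'm) topgroupoid_scheme" and G :: "('b, 'n) topgroupoid_scheme"
    and T :: "('c, 'k) topgroupoid_scheme"
    and lamS :: "'a \<Rightarrow> 'a measure" and lamG :: "'b \<Rightarrow> 'b measure"
    and lamT :: "'c \<Rightarrow> 'c measure"
    and muS :: "'a measure" and muG :: "'b measure" and muT :: "'c measure"
    and p :: "'a \<Rightarrow> 'b" and q :: "'c \<Rightarrow> 'b"
  assumes "haar_groupoid S lamS muS"
    and "haar_groupoid G lamG muG"
    and "haar_groupoid T lamT muT"
    and "haar_groupoid_hom S lamS muS G lamG muG p"
    and "haar_groupoid_hom T lamT muT G lamG muG q"
  shows "\<forall>x\<in>wpb_arr S G T p q. \<forall>E\<in>sets (borel_of (wpb_top S G T p q)).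
           emeasure (wpb_haar G lamS lamT (wpb_dom S G T p q x)) E
         = emeasure (wpb_haar G lamS lamT (wpb_rng S T x))
             (wpb_mult S T x ` (E \<inter> {y \<in> wpb_arr S G T p q. wpb_rng S T y = wpb_dom S G T p q x}))"
proof (intro ballI)
  fix x E
  assume xP: "x \<in> wpb_arr S G T p q" and Eb: "E \<in> sets (borel_of (wpb_top S G T p q))"
  obtain s g t where x: "x = (s, g, t)" by (cases x) auto
  define P where "P = wpb_arr S G T p q"
  have tgS: "topological_groupoid S" and HdS: "Hausdorff_space (gtop S)"
    and scS: "second_countable (gtop S)" and hsS: "continuous_left_haar_system S lamS"
    using assms(1) unfolding haar_groupoid_def by auto
  have tgG: "topological_groupoid G" and HdG: "Hausdorff_space (gtop G)"
    and scG: "second_countable (gtop G)"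
    using assms(2) unfolding haar_groupoid_def by auto
  have tgT: "topological_groupoid T" and HdT: "Hausdorff_space (gtop T)"
    and scT: "second_countable (gtop T)" and hsT: "continuous_left_haar_system T lamT"
    using assms(3) unfolding haar_groupoid_def by auto
  have gS: "groupoid S" using tgS unfolding topological_groupoid_def by blast
  have gG: "groupoid G" using tgG unfolding topological_groupoid_def by blast
  have gT: "groupoid T" using tgT unfolding topological_groupoid_def by blast
  have pc: "continuous_map (gtop S) (gtop G) p" using assms(4) unfolding haar_groupoid_hom_def by blast
  have qc: "continuous_map (gtop T) (gtop G) q" using assms(5) unfolding haar_groupoid_hom_def by blast
  have rGc: "continuous_map (gtop G) (gtop G) (grng G)" and dGc: "continuous_map (gtop G) (gtop G) (gdom G)"
    using tgG unfolding topological_groupoid_def by auto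
  have s: "s \<in> garr S" and g: "g \<in> garr G" and t: "t \<in> garr T"
    and rg: "grng G g = grng G (p s)" and dg: "gdom G g = grng G (q t)"
    using xP unfolding x wpb_arr_def by auto
  define u where "u = gdom S s"
  define u' where "u' = grng S s"
  define v where "v = gdom T t"
  define v' where "v' = grng T t"
  define g' where "g' = gmult G (gmult G (ginv G (p s)) g) (q t)"
  have ps: "p s \<in> garr G" using pc s by (auto simp: continuous_map_def)
  have qt: "q t \<in> garr G" using qc t by (auto simp: continuous_map_def)
  have g'G: "g' \<in> garr G"
  proof -
    have "gmult G (ginv G (p s)) g \<in> garr G" "gdom G (gmult G (ginv G (p s)) g) = gdom G g"
      using gpd_comp[OF gG gpd_inv(1)[OF gG ps] g] gpd_inv(3)[OF gG ps] rg by auto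
    then show ?thesis unfolding g'_def using gpd_comp(1)[OF gG _ qt] dg by auto
  qed
  have uS: "u \<in> gunits S" "u' \<in> gunits S" using gpd_unit[OF gS s] unfolding u_def u'_def by auto
  have vT: "v \<in> gunits T" "v' \<in> gunits T" using gpd_unit[OF gT t] unfolding v_def v'_def by auto
  have dx: "wpb_dom S G T p q x = (u, g', v)" unfolding x wpb_dom_def u_def g'_def v_def by simp
  have rx: "wpb_rng S T x = (u', g, v')" unfolding x wpb_rng_def u'_def v'_def by simp
  define BS where "BS = borel_of (gtop S)"
  define BG where "BG = borel_of (gtop G)"
  define BT where "BT = borel_of (gtop T)"
  define Pi where "Pi = BS \<Otimes>\<^sub>M (BG \<Otimes>\<^sub>M BT)"
  have lamS_sets: "sets (lamS a) = sets BS" "space (lamS a) = garr S" if "a \<in> gunits S" for a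
    using hsS that unfolding continuous_left_haar_system_def borel_measure_on_def BS_def by auto
  have lamT_sets: "sets (lamT a) = sets BT" "space (lamT a) = garr T" if "a \<in> gunits T" for a
    using hsT that unfolding continuous_left_haar_system_def borel_measure_on_def BT_def by auto
  have sfS: "sigma_finite_measure (lamS a)" if "a \<in> gunits S" for a
    using haar_sigma_finite[OF assms(1) that] .
  have sfT: "sigma_finite_measure (lamT a)" if "a \<in> gunits T" for a
    using haar_sigma_finite[OF assms(3) that] .
  have spPi: "space Pi = garr S \<times> garr G \<times> garr T"
    unfolding Pi_def BS_def BG_def BT_def by (simp add: space_pair_measure)
  have haar_eq: "wpb_haar G lamS lamT (a, h, b) = lamS a \<Otimes>\<^sub>M (return BG h \<Otimes>\<^sub>M lamT b)" for a h b
    unfolding wpb_haar_def BG_def by simp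
  have sets_haar: "sets (lamS a \<Otimes>\<^sub>M (return BG h \<Otimes>\<^sub>M lamT b)) = sets Pi"
    if "a \<in> gunits S" "b \<in> gunits T" for a h b
    unfolding Pi_def
    by (intro sets_pair_measure_cong lamS_sets(1)[OF that(1)] lamT_sets(1)[OF that(2)] sets_return)
  have opP: "W \<in> sets Pi" if "openin (prod_topology (gtop S) (prod_topology (gtop G) (gtop T))) W" for W
  proof -
    have "V \<in> sets (BG \<Otimes>\<^sub>M BT)" if "openin (prod_topology (gtop G) (gtop T)) V" for V
      by (rule open_prod_in_sets[OF scG scT _ _ that]) (simp_all add: BG_def BT_def openin_in_borel_of)
    then show ?thesis unfolding Pi_def
      by (intro open_prod_in_sets[OF scS second_countable_prod[OF scG scT] _ _ that])
         (simp_all add: BS_def openin_in_borel_of)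
  qed
  have m_fst: "(\<lambda>y. fst y) \<in> measurable Pi (borel_of (gtop S))" unfolding Pi_def BS_def by simp
  have m_fsnd: "(\<lambda>y. fst (snd y)) \<in> measurable Pi (borel_of (gtop G))" unfolding Pi_def BG_def by simp
  have m_ssnd: "(\<lambda>y. snd (snd y)) \<in> measurable Pi (borel_of (gtop T))" unfolding Pi_def BT_def by simp
  have Psets: "P \<in> sets Pi"
  proof -
    have rT: "continuous_map (gtop T) (gtop T) (grng T)" using tgT unfolding topological_groupoid_def by auto
    have rS: "continuous_map (gtop S) (gtop S) (grng S)" using tgS unfolding topological_groupoid_def by auto
    have a1: "(\<lambda>y. grng G (fst (snd y))) \<in> measurable Pi (borel_of (gtop G))"
      using measurable_compose[OF m_fsnd continuous_map_measurable[OF rGc]] .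
    have a2: "(\<lambda>y. grng G (p (fst y))) \<in> measurable Pi (borel_of (gtop G))"
      using measurable_compose[OF m_fst continuous_map_measurable[OF continuous_map_compose[OF pc rGc]]]
      by (simp add: o_def)
    have a3: "(\<lambda>y. gdom G (fst (snd y))) \<in> measurable Pi (borel_of (gtop G))"
      using measurable_compose[OF m_fsnd continuous_map_measurable[OF dGc]] .
    have a4: "(\<lambda>y. grng G (q (snd (snd y)))) \<in> measurable Pi (borel_of (gtop G))"
      using measurable_compose[OF m_ssnd continuous_map_measurable[OF continuous_map_compose[OF qc rGc]]]
      by (simp add: o_def)
    have "P = {y \<in> space Pi. grng G (fst (snd y)) = grng G (p (fst y))}
            \<inter> {y \<in> space Pi. gdom G (fst (snd y)) = grng G (q (snd (snd y)))}"
      unfolding P_def wpb_arr_def spPi by auto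
    also have "\<dots> \<in> sets Pi"
      using eq_sets[OF HdG scG a1 a2] eq_sets[OF HdG scG a3 a4] by (rule sets.Int)
    finally show ?thesis .
  qed
  have topP: "topspace (wpb_top S G T p q) = P"
    unfolding wpb_top_def P_def topspace_subtopology topspace_prod_topology wpb_arr_def by auto
  have Esets: "E \<in> sets Pi"
  proof -
    have "A \<in> sets Pi" if "A \<in> sigma_sets P {V. openin (wpb_top S G T p q) V}" for A
      using that
    proof induct
      case (Basic a)
      then obtain U where "openin (prod_topology (gtop S) (prod_topology (gtop G) (gtop T))) U" "a = U \<inter> P"
        unfolding wpb_top_def openin_subtopology P_def by auto
      then show ?case using opP Psets by auto
    next
      case Empty
      show ?case by simp
    next
      case (Compl a)
      then show ?case using Psets by auto
    next
      case (Union a)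
      then show ?case by auto
    qed
    then show ?thesis using Eb unfolding sets_borel_of topP by blast
  qed
  have EP: "E \<subseteq> P" using sets.sets_into_space[OF Eb] topP by simp
  have sinv: "ginv S s \<in> garr S" "gdom S (ginv S s) = u'" "grng S (ginv S s) = u"
    using gpd_inv[OF gS s] unfolding u_def u'_def by auto
  have tinv: "ginv T t \<in> garr T" "gdom T (ginv T t) = v'" "grng T (ginv T t) = v"
    using gpd_inv[OF gT t] unfolding v_def v'_def by auto
  define Ls where "Ls \<sigma> = (if \<sigma> \<in> rfibre S u' then gmult S (ginv S s) \<sigma> else ginv S s)" for \<sigma>
  define Lt where "Lt \<tau> = (if \<tau> \<in> rfibre T v' then gmult T (ginv T t) \<tau> else ginv T t)" for \<tau>
  have RS'b: "rfibre S u' \<in> sets (borel_of (gtop S))"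
    using rfibre_closed[OF tgS HdS] gpd_unit[OF gS s] closedin_in_borel_of unfolding u'_def by blast
  have RSb: "rfibre S u \<in> sets (borel_of (gtop S))"
    using rfibre_closed[OF tgS HdS] gpd_unit[OF gS s] closedin_in_borel_of unfolding u_def by blast
  have RT'b: "rfibre T v' \<in> sets (borel_of (gtop T))"
    using rfibre_closed[OF tgT HdT] gpd_unit[OF gT t] closedin_in_borel_of unfolding v'_def by blast
  have Ls_m: "Ls \<in> measurable (borel_of (gtop S)) (borel_of (gtop S))"
    unfolding Ls_def using measurable_piecewise[OF RS'b _ sinv(1)] transl_continuous[OF tgS sinv(1)] sinv(2)
    by simp
  have Lt_m: "Lt \<in> measurable (borel_of (gtop T)) (borel_of (gtop T))"
    unfolding Lt_def using measurable_piecewise[OF RT'b _ tinv(1)] transl_continuous[OF tgT tinv(1)] tinv(2)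
    by simp
  define F where "F = wpb_mult S T x ` (E \<inter> {y \<in> wpb_arr S G T p q. wpb_rng S T y = wpb_dom S G T p q x})"
  have Fchar: "(\<sigma>', h, \<tau>') \<in> F \<longleftrightarrow> \<sigma>' \<in> rfibre S u' \<and> h = g \<and> \<tau>' \<in> rfibre T v'
      \<and> (gmult S (ginv S s) \<sigma>', g', gmult T (ginv T t) \<tau>') \<in> E" for \<sigma>' h \<tau>'
  proof
    assume "(\<sigma>', h, \<tau>') \<in> F"
    then obtain y where y: "y \<in> E" "y \<in> P" "wpb_rng S T y = (u, g', v)" "(\<sigma>', h, \<tau>') = wpb_mult S T x y"
      unfolding F_def dx P_def by auto
    obtain \<sigma> h0 \<tau> where y0: "y = (\<sigma>, h0, \<tau>)" by (cases y) auto
    have \<sigma>: "\<sigma> \<in> garr S" "grng S \<sigma> = gdom S s" and \<tau>: "\<tau> \<in> garr T" "grng T \<tau> = gdom T t" and h0: "h0 = g'"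
      using y(2,3) unfolding y0 P_def wpb_arr_def wpb_rng_def u_def v_def by auto
    have e: "\<sigma>' = gmult S s \<sigma>" "h = g" "\<tau>' = gmult T t \<tau>"
      using y(4) unfolding y0 x wpb_mult_def by auto
    show "\<sigma>' \<in> rfibre S u' \<and> h = g \<and> \<tau>' \<in> rfibre T v'
      \<and> (gmult S (ginv S s) \<sigma>', g', gmult T (ginv T t) \<tau>') \<in> E"
      using gpd_comp[OF gS s \<sigma>(1) \<sigma>(2)[symmetric]] gpd_comp[OF gT t \<tau>(1) \<tau>(2)[symmetric]]
        gpd_cancel1[OF gS s \<sigma>] gpd_cancel1[OF gT t \<tau>] y(1) e h0
      unfolding rfibre_def u'_def v'_def y0 by auto
  next
    assume a: "\<sigma>' \<in> rfibre S u' \<and> h = g \<and> \<tau>' \<in> rfibre T v'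
      \<and> (gmult S (ginv S s) \<sigma>', g', gmult T (ginv T t) \<tau>') \<in> E"
    have \<sigma>': "\<sigma>' \<in> garr S" "grng S \<sigma>' = grng S s" and \<tau>': "\<tau>' \<in> garr T" "grng T \<tau>' = grng T t"
      using a unfolding rfibre_def u'_def v'_def by auto
    define y where "y = (gmult S (ginv S s) \<sigma>', g', gmult T (ginv T t) \<tau>')"
    have yE: "y \<in> E" using a unfolding y_def by simp
    then have yP: "y \<in> wpb_arr S G T p q" using EP unfolding P_def by auto
    have "wpb_rng S T y = wpb_dom S G T p q x"
      unfolding dx y_def wpb_rng_def using gpd_cancel2(3)[OF gS s \<sigma>'] gpd_cancel2(3)[OF gT t \<tau>']
      unfolding u_def v_def by simp
    moreover have "(\<sigma>', h, \<tau>') = wpb_mult S T x y"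
      unfolding x y_def wpb_mult_def using gpd_cancel2(1)[OF gS s \<sigma>'] gpd_cancel2(1)[OF gT t \<tau>'] a
      by simp
    ultimately show "(\<sigma>', h, \<tau>') \<in> F" unfolding F_def using yE yP by blast
  qed
  define Phi where "Phi y = (Ls (fst y), g', Lt (snd (snd y)))" for y :: "'a \<times> 'b \<times> 'c"
  have Phi_m: "Phi \<in> measurable Pi Pi"
  proof -
    have "(\<lambda>y. Ls (fst y)) \<in> measurable Pi BS" using measurable_compose[OF m_fst Ls_m] unfolding BS_def .
    moreover have "(\<lambda>y. Lt (snd (snd y))) \<in> measurable Pi BT" using measurable_compose[OF m_ssnd Lt_m] unfolding BT_def .
    moreover have "(\<lambda>y. g') \<in> measurable Pi BG" using g'G unfolding BG_def by simp
    ultimately show ?thesis unfolding Phi_def Pi_def by (intro measurable_Pair)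
  qed
  have Fsets: "F \<in> sets Pi"
  proof -
    have gb: "{g} \<in> sets (borel_of (gtop G))" using closedin_Hausdorff_singleton[OF HdG g] closedin_in_borel_of by blast
    have "F = (fst -` rfibre S u' \<inter> space Pi) \<inter> ((\<lambda>y. fst (snd y)) -` {g} \<inter> space Pi)
        \<inter> ((\<lambda>y. snd (snd y)) -` rfibre T v' \<inter> space Pi) \<inter> (Phi -` E \<inter> space Pi)"
    proof (intro set_eqI)
      fix y :: "'a \<times> 'b \<times> 'c"
      obtain a h b where y: "y = (a, h, b)" by (cases y) auto
      show "y \<in> F \<longleftrightarrow> y \<in> (fst -` rfibre S u' \<inter> space Pi) \<inter> ((\<lambda>y. fst (snd y)) -` {g} \<inter> space Pi)
        \<inter> ((\<lambda>y. snd (snd y)) -` rfibre T v' \<inter> space Pi) \<inter> (Phi -` E \<inter> space Pi)"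
        unfolding y Fchar Phi_def Ls_def Lt_def spPi using g by (auto simp: rfibre_def)
    qed
    also have "\<dots> \<in> sets Pi"
      using measurable_sets[OF m_fst RS'b] measurable_sets[OF m_fsnd gb]
        measurable_sets[OF m_ssnd RT'b] measurable_sets[OF Phi_m Esets] by auto
    finally show ?thesis .
  qed
  have slice: "emeasure (lamS a \<Otimes>\<^sub>M (return BG h \<Otimes>\<^sub>M lamT b)) Z
      = (\<integral>\<^sup>+ \<sigma>. emeasure (lamT b) {\<tau>. (\<sigma>, h, \<tau>) \<in> Z} \<partial>lamS a)"
    if ab: "a \<in> gunits S" "b \<in> gunits T" and h: "h \<in> garr G" and Z: "Z \<in> sets Pi" for a h b Z
  proof -
    have hsp0: "h \<in> space BG" using h unfolding BG_def by simp
    then have hsp: "h \<in> space (return BG h)" by simp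
    have sfN: "sigma_finite_measure (return BG h \<Otimes>\<^sub>M lamT b)"
      by (rule sigma_finite_pair_measure[OF prob_space_imp_sigma_finite[OF prob_space_return[OF hsp0]] sfT[OF ab(2)]])
    have Z': "Z \<in> sets (lamS a \<Otimes>\<^sub>M (return BG h \<Otimes>\<^sub>M lamT b))" using Z sets_haar[OF ab] by simp
    have "emeasure (lamS a \<Otimes>\<^sub>M (return BG h \<Otimes>\<^sub>M lamT b)) Z
        = (\<integral>\<^sup>+ \<sigma>. emeasure (return BG h \<Otimes>\<^sub>M lamT b) (Pair \<sigma> -` Z) \<partial>lamS a)"
      by (rule sigma_finite_measure.emeasure_pair_measure_alt[OF sfN Z'])
    also have "\<dots> = (\<integral>\<^sup>+ \<sigma>. emeasure (lamT b) {\<tau>. (\<sigma>, h, \<tau>) \<in> Z} \<partial>lamS a)"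
    proof (rule nn_integral_cong)
      fix \<sigma>
      have Y: "Pair \<sigma> -` Z \<in> sets (return BG h \<Otimes>\<^sub>M lamT b)" using Z' by (rule sets_Pair1)
      have "emeasure (return BG h \<Otimes>\<^sub>M lamT b) (Pair \<sigma> -` Z)
          = (\<integral>\<^sup>+ h'. emeasure (lamT b) (Pair h' -` (Pair \<sigma> -` Z)) \<partial>return BG h)"
        by (rule sigma_finite_measure.emeasure_pair_measure_alt[OF sfT[OF ab(2)] Y])
      also have "\<dots> = emeasure (lamT b) (Pair h -` (Pair \<sigma> -` Z))"
        using nn_integral_return[OF hsp0 sigma_finite_measure.measurable_emeasure_Pair[OF sfT[OF ab(2)] Y,
            unfolded measurable_cong_sets[OF sets_return refl]]] .
      also have "\<dots> = emeasure (lamT b) {\<tau>. (\<sigma>, h, \<tau>) \<in> Z}" by (simp add: vimage_def)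
      finally show "emeasure (return BG h \<Otimes>\<^sub>M lamT b) (Pair \<sigma> -` Z) = emeasure (lamT b) {\<tau>. (\<sigma>, h, \<tau>) \<in> Z}" .
    qed
    finally show ?thesis .
  qed
  define \<phi> where "\<phi> \<sigma> = emeasure (lamT v) {\<tau>. (\<sigma>, g', \<tau>) \<in> E}" for \<sigma>
  have LHS: "emeasure (wpb_haar G lamS lamT (wpb_dom S G T p q x)) E = (\<integral>\<^sup>+ \<sigma>. \<phi> \<sigma> \<partial>lamS u)"
    unfolding dx haar_eq \<phi>_def using slice[OF uS(1) vT(1) g'G Esets] .
  have RHS: "emeasure (wpb_haar G lamS lamT (wpb_rng S T x)) F
      = (\<integral>\<^sup>+ \<sigma>'. emeasure (lamT v') {\<tau>'. (\<sigma>', g, \<tau>') \<in> F} \<partial>lamS u')"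
    unfolding rx haar_eq using slice[OF uS(2) vT(2) g Fsets] .
  have Eslice: "{\<tau>. (\<sigma>, g', \<tau>) \<in> E} \<in> sets (borel_of (gtop T))" for \<sigma>
  proof -
    have "{\<tau>. (\<sigma>, g', \<tau>) \<in> E} = Pair g' -` (Pair \<sigma> -` E)" by auto
    also have "\<dots> \<in> sets BT" using Esets unfolding Pi_def by (intro sets_Pair1)
    finally show ?thesis unfolding BT_def .
  qed
  have psi: "emeasure (lamT v') {\<tau>'. (\<sigma>', g, \<tau>') \<in> F} = indicator (rfibre S u') \<sigma>' * \<phi> (Ls \<sigma>')"
    for \<sigma>'
  proof (cases "\<sigma>' \<in> rfibre S u'")
    case True
    then have \<sigma>': "\<sigma>' \<in> garr S" "grng S \<sigma>' = grng S s" unfolding rfibre_def u'_def by auto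
    have Ls\<sigma>: "Ls \<sigma>' = gmult S (ginv S s) \<sigma>'" using True unfolding Ls_def by simp
    let ?B = "{\<tau>. (Ls \<sigma>', g', \<tau>) \<in> E}"
    have "{\<tau>'. (\<sigma>', g, \<tau>') \<in> F} = gmult T t ` (?B \<inter> rfibre T v)"
    proof (intro set_eqI iffI)
      fix \<tau>' assume "\<tau>' \<in> {\<tau>'. (\<sigma>', g, \<tau>') \<in> F}"
      then have a: "\<tau>' \<in> rfibre T v'" "(gmult S (ginv S s) \<sigma>', g', gmult T (ginv T t) \<tau>') \<in> E"
        using Fchar by auto
      have \<tau>': "\<tau>' \<in> garr T" "grng T \<tau>' = grng T t" using a(1) unfolding rfibre_def v'_def by auto
      have "gmult T (ginv T t) \<tau>' \<in> ?B \<inter> rfibre T v"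
        using a(2) gpd_cancel2(2,3)[OF gT t \<tau>'] unfolding Ls\<sigma> rfibre_def v_def by simp
      moreover have "\<tau>' = gmult T t (gmult T (ginv T t) \<tau>')" using gpd_cancel2(1)[OF gT t \<tau>'] by simp
      ultimately show "\<tau>' \<in> gmult T t ` (?B \<inter> rfibre T v)" by blast
    next
      fix \<tau>' assume "\<tau>' \<in> gmult T t ` (?B \<inter> rfibre T v)"
      then obtain \<tau> where \<tau>: "\<tau> \<in> ?B" "\<tau> \<in> garr T" "grng T \<tau> = gdom T t" "\<tau>' = gmult T t \<tau>"
        unfolding rfibre_def v_def by auto
      have "\<tau>' \<in> rfibre T v'" using gpd_comp[OF gT t \<tau>(2) \<tau>(3)[symmetric]] \<tau>(4)
        unfolding rfibre_def v'_def by simp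
      moreover have "gmult T (ginv T t) \<tau>' = \<tau>" using gpd_cancel1[OF gT t \<tau>(2,3)] \<tau>(4) by simp
      ultimately show "\<tau>' \<in> {\<tau>'. (\<sigma>', g, \<tau>') \<in> F}" using Fchar True \<tau>(1) Ls\<sigma> by auto
    qed
    also have "emeasure (lamT v') \<dots> = emeasure (lamT v) ?B"
      using hsT t Eslice unfolding continuous_left_haar_system_def v_def v'_def by (auto simp: BT_def)
    finally show ?thesis using True unfolding \<phi>_def by simp
  next
    case False
    then have "{\<tau>'. (\<sigma>', g, \<tau>') \<in> F} = {}" using Fchar by auto
    then show ?thesis using False by simp
  qed
  (* change of variables in S *)
  have phi_m: "\<phi> \<in> borel_measurable (borel_of (gtop S))"
  proof -
    define E2 where "E2 = (\<lambda>z. (fst z, g', snd z)) -` E \<inter> space (BS \<Otimes>\<^sub>M lamT v)"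
    have km: "(\<lambda>z. (fst z, g', snd z)) \<in> measurable (BS \<Otimes>\<^sub>M lamT v) Pi"
    proof -
      have "(\<lambda>z. (fst z, g', snd z)) \<in> measurable (BS \<Otimes>\<^sub>M BT) Pi"
        unfolding Pi_def using g'G by (auto simp: BG_def)
      then show ?thesis
        by (subst measurable_cong_sets[OF sets_pair_measure_cong[OF refl lamT_sets(1)[OF vT(1)]] refl])
    qed
    have E2s: "E2 \<in> sets (BS \<Otimes>\<^sub>M lamT v)" unfolding E2_def using measurable_sets[OF km Esets] .
    have "(\<lambda>\<sigma>. emeasure (lamT v) (Pair \<sigma> -` E2)) \<in> borel_measurable BS"
      by (rule sigma_finite_measure.measurable_emeasure_Pair[OF sfT[OF vT(1)] E2s])
    moreover have "Pair \<sigma> -` E2 = {\<tau>. (\<sigma>, g', \<tau>) \<in> E}" for \<sigma>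
      using EP lamT_sets(2)[OF vT(1)] unfolding E2_def P_def wpb_arr_def by (auto simp: space_pair_measure BS_def)
    ultimately show ?thesis unfolding \<phi>_def BS_def by simp
  qed
  define D where "D = distr (density (lamS u') (indicator (rfibre S u'))) (borel_of (gtop S)) Ls"
  have Ls_m': "Ls \<in> measurable (density (lamS u') (indicator (rfibre S u'))) (borel_of (gtop S))"
  proof -
    have "sets (density (lamS u') (indicator (rfibre S u'))) = sets (borel_of (gtop S))"
      using lamS_sets(1)[OF uS(2)] by (simp add: BS_def)
    then show ?thesis using Ls_m by (subst measurable_cong_sets[OF _ refl])
  qed
  have ind_m: "(indicator (rfibre S u') :: 'a \<Rightarrow> ennreal) \<in> borel_measurable (lamS u')"
    using RS'b lamS_sets(1)[OF uS(2)] by (simp add: BS_def)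
  have Dlam: "D = lamS u"
  proof (rule measure_eqI)
    show "sets D = sets (lamS u)" unfolding D_def using lamS_sets(1)[OF uS(1)] by (simp add: BS_def)
    fix A assume "A \<in> sets D"
    then have A: "A \<in> sets (borel_of (gtop S))" unfolding D_def by simp
    then have Asub: "A \<subseteq> garr S" using sets.sets_into_space by fastforce
    define B where "B = rfibre S u' \<inter> (Ls -` A \<inter> garr S)"
    have Bs: "B \<in> sets (borel_of (gtop S))"
      unfolding B_def using measurable_sets[OF Ls_m A] RS'b by auto
    have "emeasure D A = emeasure (density (lamS u') (indicator (rfibre S u'))) (Ls -` A \<inter> garr S)"
      unfolding D_def using emeasure_distr[OF Ls_m' A] lamS_sets(2)[OF uS(2)] by simp
    also have "\<dots> = (\<integral>\<^sup>+ \<sigma>. indicator (rfibre S u') \<sigma> * indicator (Ls -` A \<inter> garr S) \<sigma> \<partial>lamS u')"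
      using measurable_sets[OF Ls_m A] lamS_sets[OF uS(2)]
      by (subst emeasure_density[OF ind_m]) (auto simp: BS_def mult.commute)
    also have "\<dots> = (\<integral>\<^sup>+ \<sigma>. indicator B \<sigma> \<partial>lamS u')"
      unfolding B_def by (simp add: indicator_inter_arith)
    also have "\<dots> = emeasure (lamS u') B" using Bs lamS_sets(1)[OF uS(2)] by (simp add: BS_def)
    also have "\<dots> = emeasure (lamS u) (gmult S (ginv S s) ` (B \<inter> rfibre S u'))"
      using hsS sinv Bs unfolding continuous_left_haar_system_def by auto
    also have "gmult S (ginv S s) ` (B \<inter> rfibre S u') = A \<inter> rfibre S u"
    proof (intro set_eqI iffI)
      fix \<sigma> assume "\<sigma> \<in> gmult S (ginv S s) ` (B \<inter> rfibre S u')"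
      then obtain \<sigma>' where \<sigma>': "\<sigma>' \<in> garr S" "grng S \<sigma>' = grng S s" "Ls \<sigma>' \<in> A" "\<sigma> = gmult S (ginv S s) \<sigma>'"
        unfolding B_def rfibre_def u'_def by auto
      have "Ls \<sigma>' = gmult S (ginv S s) \<sigma>'" unfolding Ls_def rfibre_def u'_def using \<sigma>' by simp
      then show "\<sigma> \<in> A \<inter> rfibre S u" using \<sigma>' gpd_cancel2(2,3)[OF gS s \<sigma>'(1,2)]
        unfolding rfibre_def u_def by simp
    next
      fix \<sigma> assume "\<sigma> \<in> A \<inter> rfibre S u"
      then have \<sigma>: "\<sigma> \<in> A" "\<sigma> \<in> garr S" "grng S \<sigma> = gdom S s" unfolding rfibre_def u_def by auto
      define \<sigma>' where "\<sigma>' = gmult S s \<sigma>"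
      have \<sigma>'a: "\<sigma>' \<in> garr S" "grng S \<sigma>' = grng S s" using gpd_comp[OF gS s \<sigma>(2) \<sigma>(3)[symmetric]]
        unfolding \<sigma>'_def by auto
      have c: "gmult S (ginv S s) \<sigma>' = \<sigma>" using gpd_cancel1[OF gS s \<sigma>(2,3)] unfolding \<sigma>'_def .
      have "Ls \<sigma>' = \<sigma>" unfolding Ls_def rfibre_def u'_def using \<sigma>'a c by simp
      then have "\<sigma>' \<in> B \<inter> rfibre S u'" unfolding B_def rfibre_def u'_def using \<sigma>'a \<sigma>(1) by simp
      then show "\<sigma> \<in> gmult S (ginv S s) ` (B \<inter> rfibre S u')" using c by force
    qed
    also have "emeasure (lamS u) (A \<inter> rfibre S u) = emeasure (lamS u) A"
    proof -
      have N: "garr S - rfibre S u \<in> null_sets (lamS u)"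
      proof -
        have "garr S - rfibre S u \<in> sets (lamS u)"
          using RSb lamS_sets(1)[OF uS(1)] sets.compl_sets[of "rfibre S u" "borel_of (gtop S)"]
          by (simp add: BS_def)
        moreover have "emeasure (lamS u) (garr S - rfibre S u) = 0"
          using hsS uS(1) unfolding continuous_left_haar_system_def by blast
        ultimately show ?thesis by (simp add: null_sets_def)
      qed
      have "A \<inter> rfibre S u = A - (garr S - rfibre S u)" using Asub by auto
      then show ?thesis
        using emeasure_Diff_null_set[OF N] A lamS_sets(1)[OF uS(1)] by (simp add: BS_def)
    qed
    finally show "emeasure D A = emeasure (lamS u) A" .
  qed
  have "(\<integral>\<^sup>+ \<sigma>. \<phi> \<sigma> \<partial>lamS u) = (\<integral>\<^sup>+ \<sigma>. \<phi> \<sigma> \<partial>D)" using Dlam by simp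
  also have "\<dots> = (\<integral>\<^sup>+ \<sigma>'. \<phi> (Ls \<sigma>') \<partial>density (lamS u') (indicator (rfibre S u')))"
    unfolding D_def by (rule nn_integral_distr[OF Ls_m']) (simp add: phi_m)
  also have "\<dots> = (\<integral>\<^sup>+ \<sigma>'. indicator (rfibre S u') \<sigma>' * \<phi> (Ls \<sigma>') \<partial>lamS u')"
  proof (rule nn_integral_density[OF ind_m])
    show "(\<lambda>\<sigma>'. \<phi> (Ls \<sigma>')) \<in> borel_measurable (lamS u')"
      using measurable_compose[OF Ls_m phi_m] lamS_sets(1)[OF uS(2)]
      by (simp add: BS_def cong: measurable_cong_sets)
  qed
  also have "\<dots> = (\<integral>\<^sup>+ \<sigma>'. emeasure (lamT v') {\<tau>'. (\<sigma>', g, \<tau>') \<in> F} \<partial>lamS u')"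
    using psi by simp
  finally show "emeasure (wpb_haar G lamS lamT (wpb_dom S G T p q x)) E
         = emeasure (wpb_haar G lamS lamT (wpb_rng S T x))
             (wpb_mult S T x ` (E \<inter> {y \<in> wpb_arr S G T p q. wpb_rng S T y = wpb_dom S G T p q x}))"
    using LHS RHS unfolding F_def by simp
qed

end
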